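(* The pca $\mathcal{E}$ of c.e. sets does not embed in $\mathcal{K}_2^{\mathrm{eff}}$.
   Context: A pca is a set with a partial binary application operation containing distinct $\mathrm{s},\mathrm{k}$ with $\mathrm{k}ab\downarrow=a$, $\mathrm{s}ab\downarrow$, $\mathrm{s}abc\simeq(ac)(bc)$. An embedding of pcas is an injective map $f$ with: if $ab$ is defined then $f(a)f(b)$ is defined and equals $f(ab)$. $\mathcal{E}$: the c.e. subsets of $\omega$ with application $A\cdot B=\{n:\exists u\,(\langle n,u\rangle\in A\wedge D_u\subseteq B)\}$, where $\langle\cdot,\cdot\rangle$ is a bijective computable pairing with $\langle 0,0\rangle=0$ and $D_u$ is the finite set with canonical code $u$. $\mathcal{K}_2^{\mathrm{eff}}$: elements are the total computable functions $g:\omega\to\omega$, with $g\cdot h$ the function $n\mapsto\Phi^{g\oplus h}_{g(0)}(n)$ ($\Phi_e$ the $e$-th Turing functional, $(g\oplus h)(2n)=g(n)$, $(g\oplus h)(2n+1)=h(n)$), defined if and only if this function is total. *)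

theory Defs
  imports Main "HOL-Library.Countable" "HOL-Library.Nat_Bijection"
begin

datatype prog =
    Zero
  | Succ
  | Proj nat
  | Orc                      \<comment> \<open>unary oracle call: x \<mapsto> \<alpha> x\<close>
  | Comp prog "prog list"
  | PrimRec prog prog
  | Mu prog

instance prog :: countable by countable_datatype

inductive eval :: "(nat \<Rightarrow> nat) \<Rightarrow> prog \<Rightarrow> nat list \<Rightarrow> nat \<Rightarrow> bool" for \<alpha> where
  ev_zero: "eval \<alpha> Zero xs 0"
| ev_succ: "eval \<alpha> Succ (x # xs) (Suc x)"
| ev_proj: "i < length xs \<Longrightarrow> eval \<alpha> (Proj i) xs (xs ! i)"
| ev_orc:  "eval \<alpha> Orc (x # xs) (\<alpha> x)"
| ev_comp: "list_all2 (\<lambda>g y. eval \<alpha> g xs y) gs ys \<Longrightarrow> eval \<alpha> f ys z \<Longrightarrow> eval \<alpha> (Comp f gs) xs z"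
| ev_pr0:  "eval \<alpha> f xs y \<Longrightarrow> eval \<alpha> (PrimRec f g) (0 # xs) y"
| ev_prS:  "eval \<alpha> (PrimRec f g) (n # xs) r \<Longrightarrow> eval \<alpha> g (n # r # xs) y
            \<Longrightarrow> eval \<alpha> (PrimRec f g) (Suc n # xs) y"
| ev_mu:   "eval \<alpha> f (y # xs) 0 \<Longrightarrow> (\<forall>z<y. \<exists>v. v \<noteq> 0 \<and> eval \<alpha> f (z # xs) v)
            \<Longrightarrow> eval \<alpha> (Mu f) xs y"

definition Phi :: "nat \<Rightarrow> (nat \<Rightarrow> nat) \<Rightarrow> nat \<Rightarrow> nat \<Rightarrow> bool" where
  "Phi e \<alpha> n y \<longleftrightarrow> eval \<alpha> (from_nat e) [n] y"

definition ce_sets :: "nat set set" where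
  "ce_sets = {A. \<exists>p. A = {n. \<exists>y. eval (\<lambda>_. 0) p [n] y}}"

definition Dcan :: "nat \<Rightarrow> nat set" where
  "Dcan u = {i. bit u i}"

definition E_app :: "nat set \<Rightarrow> nat set \<Rightarrow> nat set" where
  "E_app A B = {n. \<exists>u. prod_encode (n, u) \<in> A \<and> Dcan u \<subseteq> B}"

definition K2eff :: "(nat \<Rightarrow> nat) set" where
  "K2eff = {g. \<exists>p. \<forall>n. eval (\<lambda>_. 0) p [n] (g n)}"

definition join :: "(nat \<Rightarrow> nat) \<Rightarrow> (nat \<Rightarrow> nat) \<Rightarrow> nat \<Rightarrow> nat" where
  "join g h m = (if even m then g (m div 2) else h (m div 2))"

definition K2app :: "(nat \<Rightarrow> nat) \<Rightarrow> (nat \<Rightarrow> nat) \<Rightarrow> (nat \<Rightarrow> nat) \<Rightarrow> bool" where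
  "K2app g h k \<longleftrightarrow> (\<forall>n. Phi (g 0) (join g h) n (k n))"

definition embeds_E_K2eff :: "(nat set \<Rightarrow> (nat \<Rightarrow> nat)) \<Rightarrow> bool" where
  "embeds_E_K2eff f \<longleftrightarrow>
     inj_on f ce_sets \<and> f ` ce_sets \<subseteq> K2eff \<and>
     (\<forall>A\<in>ce_sets. \<forall>B\<in>ce_sets. E_app A B \<in> ce_sets \<longrightarrow> K2app (f A) (f B) (f (E_app A B)))"

end

theory Submission
  imports Defs
begin

section \<open>Determinism\<close>

lemma list_all2_det:
  assumes "list_all2 (\<lambda>a b. P a b \<and> (\<forall>b'. Q a b' \<longrightarrow> b = b')) as bs"
    and "list_all2 Q as bs'"
  shows "bs = bs'"
  using assms
proof (induction as arbitrary: bs bs')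
  case Nil then show ?case by simp
next
  case (Cons a as)
  then obtain b bs0 where "bs = b # bs0" by (cases bs) auto
  moreover obtain b' bs0' where "bs' = b' # bs0'" using Cons.prems by (cases bs') auto
  ultimately show ?case using Cons by auto
qed

lemma eval_det: "eval \<alpha> p xs y \<Longrightarrow> eval \<alpha> p xs y' \<Longrightarrow> y = y'"
proof (induction arbitrary: y' rule: eval.induct)
  case (ev_comp xs gs ys f z)
  from ev_comp.prems obtain ys' where a: "list_all2 (\<lambda>g. eval \<alpha> g xs) gs ys'" and b: "eval \<alpha> f ys' y'"
    by (cases rule: eval.cases) auto
  have "ys = ys'"
    by (rule list_all2_det[OF _ a]) (use ev_comp.IH(1) in \<open>auto elim: list_all2_mono\<close>)
  then show ?case using ev_comp b by auto
next
  case (ev_mu f y xs)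
  from ev_mu.prems have a: "eval \<alpha> f (y' # xs) 0" and b: "\<forall>z<y'. \<exists>v. v \<noteq> 0 \<and> eval \<alpha> f (z # xs) v"
    by (cases rule: eval.cases; auto)+
  show ?case
  proof (rule ccontr)
    assume "y \<noteq> y'"
    then consider "y < y'" | "y' < y" by linarith
    then show False
    proof cases
      case 1
      then obtain v where "v \<noteq> 0" "eval \<alpha> f (y # xs) v" using b by auto
      then show False using ev_mu.IH(1) by auto
    next
      case 2
      then obtain v where "v \<noteq> 0" "\<forall>w. eval \<alpha> f (y' # xs) w \<longrightarrow> v = w" using ev_mu.IH(2) 2 by auto
      then show False using a by auto
    qed
  qed
next
  case (ev_zero xs) from ev_zero.prems show ?case by (cases rule: eval.cases) auto
next
  case (ev_succ x xs) from ev_succ.prems show ?case by (cases rule: eval.cases) auto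
next
  case (ev_proj i xs) from ev_proj.prems show ?case by (cases rule: eval.cases) auto
next
  case (ev_orc x xs) from ev_orc.prems show ?case by (cases rule: eval.cases) auto
next
  case (ev_pr0 f xs y g) from ev_pr0.prems show ?case by (cases rule: eval.cases) (use ev_pr0.IH in auto)
next
  case (ev_prS f g n xs r y)
  from ev_prS.prems obtain r' where "eval \<alpha> (PrimRec f g) (n # xs) r'" "eval \<alpha> g (n # r' # xs) y'"
    by (cases rule: eval.cases) auto
  then show ?case using ev_prS.IH by auto
qed


definition rcomp :: "nat \<Rightarrow> ((nat \<Rightarrow> nat) \<Rightarrow> nat) \<Rightarrow> bool" where
  "rcomp m F \<longleftrightarrow> (\<exists>p. \<forall>e. eval (\<lambda>_. 0) p (map e [0..<m]) (F e))"

fun constp :: "nat \<Rightarrow> prog" where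
  "constp 0 = Zero"
| "constp (Suc c) = Comp Succ [constp c]"

lemma eval_constp: "eval \<alpha> (constp c) xs c"
proof (induction c)
  case 0 then show ?case by (simp add: ev_zero)
next
  case (Suc c)
  have "list_all2 (\<lambda>g. eval \<alpha> g xs) [constp c] [c]" using Suc by simp
  moreover have "eval \<alpha> Succ [c] (Suc c)" by (rule ev_succ)
  ultimately show ?case by (metis constp.simps(2) ev_comp)
qed

lemma rc_cong: "rcomp m G \<Longrightarrow> (\<And>e. F e = G e) \<Longrightarrow> rcomp m F"
  unfolding rcomp_def by simp

lemma rc_const: "rcomp m (\<lambda>e. c)"
  unfolding rcomp_def by (rule exI[of _ "constp c"]) (simp add: eval_constp)

lemma eval_proj_map: "j < m \<Longrightarrow> eval \<alpha> (Proj j) (map e [0..<m]) (e j)"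
  using ev_proj[of j "map e [0..<m]" \<alpha>] by simp

lemma rc_proj: "j < m \<Longrightarrow> rcomp m (\<lambda>e. e j)"
  unfolding rcomp_def
  by (rule exI[of _ "Proj j"]) (metis (no_types, lifting) add_0 diff_zero ev_proj length_map length_upt nth_map_upt)

lemma rc_comp:
  assumes "rcomp k G" and "\<forall>i<k. rcomp m (Fs i)"
  shows "rcomp m (\<lambda>e. G (\<lambda>i. Fs i e))"
proof -
  obtain pG where pG: "\<forall>e. eval (\<lambda>_. 0) pG (map e [0..<k]) (G e)" using assms(1) unfolding rcomp_def by blast
  have "\<forall>i<k. \<exists>p. \<forall>e. eval (\<lambda>_. 0) p (map e [0..<m]) (Fs i e)" using assms(2) unfolding rcomp_def by blast
  then obtain pf where pf: "\<forall>i<k. \<forall>e. eval (\<lambda>_. 0) (pf i) (map e [0..<m]) (Fs i e)" by metis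
  show ?thesis unfolding rcomp_def
  proof (intro exI allI)
    fix e
    have "list_all2 (\<lambda>g. eval (\<lambda>_. 0) g (map e [0..<m])) (map pf [0..<k]) (map (\<lambda>i. Fs i e) [0..<k])"
      using pf by (auto simp: list_all2_conv_all_nth)
    moreover have "eval (\<lambda>_. 0) pG (map (\<lambda>i. Fs i e) [0..<k]) (G (\<lambda>i. Fs i e))" using pG by blast
    ultimately show "eval (\<lambda>_. 0) (Comp pG (map pf [0..<k])) (map e [0..<m]) (G (\<lambda>i. Fs i e))"
      by (rule ev_comp)
  qed
qed

lemma rc_reindex:
  assumes "rcomp k G" and "\<forall>i<k. \<sigma> i < m"
  shows "rcomp m (\<lambda>e. G (\<lambda>i. e (\<sigma> i)))"
  using rc_comp[OF assms(1), of m "\<lambda>i e. e (\<sigma> i)"] assms(2) rc_proj by blast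

lemma map_upt_Suc2: "map f [0..<Suc (Suc m)] = f 0 # f 1 # map (\<lambda>j. f (Suc (Suc j))) [0..<m]"
  by (simp add: map_upt_Suc del: upt_Suc)

lemma rc_rec:
  assumes "rcomp m N" and "rcomp m B" and "rcomp (Suc (Suc m)) (\<lambda>e. S (e 0) (e 1) (\<lambda>j. e (Suc (Suc j))))"
  shows "rcomp m (\<lambda>e. rec_nat (B e) (\<lambda>k r. S k r e) (N e))"
proof -
  obtain pN where pN: "\<forall>e. eval (\<lambda>_. 0) pN (map e [0..<m]) (N e)" using assms(1) unfolding rcomp_def by blast
  obtain pB where pB: "\<forall>e. eval (\<lambda>_. 0) pB (map e [0..<m]) (B e)" using assms(2) unfolding rcomp_def by blast
  obtain pS where pS: "\<forall>e. eval (\<lambda>_. 0) pS (map e [0..<Suc (Suc m)]) (S (e 0) (e 1) (\<lambda>j. e (Suc (Suc j))))"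
    using assms(3) unfolding rcomp_def by blast
  have R: "eval (\<lambda>_. 0) (PrimRec pB pS) (n # map e [0..<m]) (rec_nat (B e) (\<lambda>k r. S k r e) n)" for n e
  proof (induction n)
    case 0 then show ?case using pB by (simp add: ev_pr0)
  next
    case (Suc n)
    let ?r = "rec_nat (B e) (\<lambda>k r. S k r e) n"
    define e' where "e' = (\<lambda>j. if j = 0 then n else if j = 1 then ?r else e (j - 2))"
    have "map e' [0..<Suc (Suc m)] = n # ?r # map e [0..<m]"
      unfolding map_upt_Suc2 by (simp add: e'_def)
    moreover have "(\<lambda>j. e' (Suc (Suc j))) = e" by (simp add: e'_def)
    ultimately have "eval (\<lambda>_. 0) pS (n # ?r # map e [0..<m]) (S n ?r e)"
      using pS[rule_format, of e'] by (simp add: e'_def)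
    then show ?case using Suc by (simp add: ev_prS)
  qed
  show ?thesis unfolding rcomp_def
  proof (intro exI allI)
    fix e
    have "list_all2 (\<lambda>g. eval (\<lambda>_. 0) g (map e [0..<m])) (pN # map Proj [0..<m]) (N e # map e [0..<m])"
      using pN by (auto simp: list_all2_conv_all_nth nth_Cons' intro: eval_proj_map)
    then show "eval (\<lambda>_. 0) (Comp (PrimRec pB pS) (pN # map Proj [0..<m])) (map e [0..<m]) (rec_nat (B e) (\<lambda>k r. S k r e) (N e))"
      using R by (rule ev_comp)
  qed
qed


lemma rc_suc1: "rcomp 1 (\<lambda>e. Suc (e 0))"
  unfolding rcomp_def by (rule exI[of _ Succ]) (simp add: ev_succ)

lemma rc_un: "rcomp 1 (\<lambda>e. g (e 0)) \<Longrightarrow> rcomp m A \<Longrightarrow> rcomp m (\<lambda>e. g (A e))"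
  using rc_comp[of 1 "\<lambda>e. g (e 0)" m "\<lambda>i. A"] by simp

lemma rc_bin: "rcomp 2 (\<lambda>e. g (e 0) (e 1)) \<Longrightarrow> rcomp m A \<Longrightarrow> rcomp m B \<Longrightarrow> rcomp m (\<lambda>e. g (A e) (B e))"
  using rc_comp[of 2 "\<lambda>e. g (e 0) (e 1)" m "\<lambda>i. if i = 0 then A else B"] by (simp add: less_2_cases_iff)

lemma rc_shift1: "rcomp m A \<Longrightarrow> rcomp (Suc m) (\<lambda>e. A (\<lambda>j. e (Suc j)))"
  using rc_reindex[of m A Suc "Suc m"] by simp

lemma rc_shift2: "rcomp m A \<Longrightarrow> rcomp (Suc (Suc m)) (\<lambda>e. A (\<lambda>j. e (Suc (Suc j))))"
  using rc_reindex[of m A "\<lambda>j. Suc (Suc j)" "Suc (Suc m)"] by simp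

lemma rc_Suc: "rcomp m A \<Longrightarrow> rcomp m (\<lambda>e. Suc (A e))"
  by (rule rc_un[OF rc_suc1])

lemma rc_if:
  assumes "rcomp m (\<lambda>e. of_bool (P e))" "rcomp m A" "rcomp m B"
  shows "rcomp m (\<lambda>e. if P e then A e else B e)"
proof -
  have "rcomp m (\<lambda>e. rec_nat (B e) (\<lambda>k r. A e) (of_bool (P e)))"
    by (rule rc_rec[OF assms(1) assms(3)]) (rule rc_shift2[OF assms(2)])
  then show ?thesis by (rule rc_cong) simp
qed

lemma rc_eq0_1: "rcomp 1 (\<lambda>e. of_bool (e 0 = 0))"
proof -
  have "rcomp 1 (\<lambda>e. rec_nat 1 (\<lambda>k r. 0) (e 0))"
    by (rule rc_rec[OF rc_proj rc_const rc_const]) simp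
  then show ?thesis by (rule rc_cong) (case_tac "e 0"; simp)
qed

lemma rc_eq0: "rcomp m A \<Longrightarrow> rcomp m (\<lambda>e. of_bool (A e = 0))"
  by (rule rc_un[OF rc_eq0_1])

lemma rc_add2: "rcomp 2 (\<lambda>e. e 0 + e 1)"
proof -
  have r: "rcomp 2 (\<lambda>e. rec_nat (e 0) (\<lambda>k r. Suc r) (e 1))"
    by (intro rc_rec rc_proj rc_Suc; simp)
  have eq: "rec_nat a (\<lambda>k r. Suc r) b = a + b" for a b :: nat by (induction b) auto
  show ?thesis by (rule rc_cong[OF r]) (rule eq[symmetric])
qed

lemma rc_add: "rcomp m A \<Longrightarrow> rcomp m B \<Longrightarrow> rcomp m (\<lambda>e. A e + B e)"
  by (rule rc_bin[OF rc_add2])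

lemma rc_pred1: "rcomp 1 (\<lambda>e. e 0 - 1)"
proof -
  have "rcomp 1 (\<lambda>e. rec_nat 0 (\<lambda>k r. k) (e 0))"
    by (rule rc_rec[OF rc_proj rc_const]) (auto intro: rc_proj)
  then show ?thesis by (rule rc_cong) (case_tac "e 0"; simp)
qed

lemma rc_sub2: "rcomp 2 (\<lambda>e. e 0 - e 1)"
proof -
  have r: "rcomp 2 (\<lambda>e. rec_nat (e 0) (\<lambda>k r. r - 1) (e 1))"
    by (intro rc_rec rc_proj rc_un[OF rc_pred1]; simp)
  have eq: "rec_nat a (\<lambda>k r. r - 1) b = a - b" for a b :: nat by (induction b) auto
  show ?thesis by (rule rc_cong[OF r]) (rule eq[symmetric])
qed

lemma rc_sub: "rcomp m A \<Longrightarrow> rcomp m B \<Longrightarrow> rcomp m (\<lambda>e. A e - B e)"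
  by (rule rc_bin[OF rc_sub2])

lemma rc_mult2: "rcomp 2 (\<lambda>e. e 0 * e 1)"
proof -
  have r: "rcomp 2 (\<lambda>e. rec_nat 0 (\<lambda>k r. r + e 0) (e 1))"
    by (intro rc_rec rc_proj rc_const rc_add; simp)
  have eq: "rec_nat 0 (\<lambda>k r. r + a) b = a * b" for a b :: nat by (induction b) auto
  show ?thesis by (rule rc_cong[OF r]) (rule eq[symmetric])
qed

lemma rc_mult: "rcomp m A \<Longrightarrow> rcomp m B \<Longrightarrow> rcomp m (\<lambda>e. A e * B e)"
  by (rule rc_bin[OF rc_mult2])

lemma rc_not: "rcomp m (\<lambda>e. of_bool (P e)) \<Longrightarrow> rcomp m (\<lambda>e. of_bool (\<not> P e))"
  by (drule rc_eq0) (erule rc_cong; simp)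

lemma rc_conj: "rcomp m (\<lambda>e. of_bool (P e)) \<Longrightarrow> rcomp m (\<lambda>e. of_bool (Q e)) \<Longrightarrow> rcomp m (\<lambda>e. of_bool (P e \<and> Q e))"
  by (drule (1) rc_mult) (erule rc_cong; simp)

lemma rc_disj: "rcomp m (\<lambda>e. of_bool (P e)) \<Longrightarrow> rcomp m (\<lambda>e. of_bool (Q e)) \<Longrightarrow> rcomp m (\<lambda>e. of_bool (P e \<or> Q e))"
  by (drule (1) rc_add, drule rc_eq0, drule rc_not) (erule rc_cong; simp)

lemma rc_imp: "rcomp m (\<lambda>e. of_bool (P e)) \<Longrightarrow> rcomp m (\<lambda>e. of_bool (Q e)) \<Longrightarrow> rcomp m (\<lambda>e. of_bool (P e \<longrightarrow> Q e))"
  by (drule rc_not, drule (1) rc_disj) (erule rc_cong; simp)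

lemma rc_eq: "rcomp m A \<Longrightarrow> rcomp m B \<Longrightarrow> rcomp m (\<lambda>e. of_bool (A e = B e))"
proof -
  assume a: "rcomp m A" "rcomp m B"
  have "rcomp m (\<lambda>e. of_bool ((A e - B e) + (B e - A e) = 0))"
    by (intro rc_eq0 rc_add rc_sub a)
  then show ?thesis by (rule rc_cong) auto
qed

lemma rc_less: "rcomp m A \<Longrightarrow> rcomp m B \<Longrightarrow> rcomp m (\<lambda>e. of_bool (A e < B e))"
proof -
  assume a: "rcomp m A" "rcomp m B"
  have "rcomp m (\<lambda>e. of_bool (\<not> (B e - A e = 0)))"
    by (intro rc_not rc_eq0 rc_sub a)
  then show ?thesis by (rule rc_cong) auto
qed

lemma rc_le: "rcomp m A \<Longrightarrow> rcomp m B \<Longrightarrow> rcomp m (\<lambda>e. of_bool (A e \<le> B e))"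
proof -
  assume a: "rcomp m A" "rcomp m B"
  have "rcomp m (\<lambda>e. of_bool (A e - B e = 0))"
    by (intro rc_eq0 rc_sub a)
  then show ?thesis by (rule rc_cong) auto
qed

lemma rc_True: "rcomp m (\<lambda>e. of_bool True)" and rc_False: "rcomp m (\<lambda>e. of_bool False)"
  by (rule rc_const)+

lemma rc_bex:
  assumes "rcomp (Suc m) (\<lambda>e. of_bool (P (e 0) (\<lambda>j. e (Suc j))))" "rcomp m N"
  shows "rcomp m (\<lambda>e. of_bool (\<exists>i<N e. P i e))"
proof -
  define \<sigma> where "\<sigma> = (\<lambda>i::nat. if i = 0 then 0 else Suc i)"
  have "rcomp (Suc (Suc m)) (\<lambda>e. of_bool (P ((\<lambda>i. e (\<sigma> i)) 0) (\<lambda>j. (\<lambda>i. e (\<sigma> i)) (Suc j))))"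
    by (rule rc_reindex[OF assms(1)]) (simp add: \<sigma>_def)
  then have s: "rcomp (Suc (Suc m)) (\<lambda>e. of_bool (P (e 0) (\<lambda>j. e (Suc (Suc j)))))"
    by (rule rc_cong) (simp add: \<sigma>_def)
  have r: "rcomp m (\<lambda>e. rec_nat 0 (\<lambda>k r. of_bool (r \<noteq> 0 \<or> P k e)) (N e))"
    by (rule rc_rec[OF assms(2) rc_const]) (intro rc_disj rc_not rc_eq0 rc_proj s; simp)
  have eq: "rec_nat 0 (\<lambda>k r. of_bool (r \<noteq> 0 \<or> P k e)) n = of_bool (\<exists>i<n. P i e)" for n e
    by (induction n) (auto simp: less_Suc_eq)
  show ?thesis by (rule rc_cong[OF r]) (rule eq[symmetric])
qed

lemma rc_ball:
  assumes "rcomp (Suc m) (\<lambda>e. of_bool (P (e 0) (\<lambda>j. e (Suc j))))" "rcomp m N"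
  shows "rcomp m (\<lambda>e. of_bool (\<forall>i<N e. P i e))"
proof -
  have "rcomp m (\<lambda>e. of_bool (\<not> (\<exists>i<N e. \<not> P i e)))"
    by (intro rc_not rc_bex[OF _ assms(2)] assms(1))
  then show ?thesis by (rule rc_cong) auto
qed

lemma rc_sum:
  assumes "rcomp (Suc m) (\<lambda>e. F (e 0) (\<lambda>j. e (Suc j)))" "rcomp m N"
  shows "rcomp m (\<lambda>e. \<Sum>i<N e. F i e)"
proof -
  define \<sigma> where "\<sigma> = (\<lambda>i::nat. if i = 0 then 0 else Suc i)"
  have "rcomp (Suc (Suc m)) (\<lambda>e. F ((\<lambda>i. e (\<sigma> i)) 0) (\<lambda>j. (\<lambda>i. e (\<sigma> i)) (Suc j)))"
    by (rule rc_reindex[OF assms(1)]) (simp add: \<sigma>_def)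
  then have s: "rcomp (Suc (Suc m)) (\<lambda>e. F (e 0) (\<lambda>j. e (Suc (Suc j))))"
    by (rule rc_cong) (simp add: \<sigma>_def)
  have r: "rcomp m (\<lambda>e. rec_nat 0 (\<lambda>k r. r + F k e) (N e))"
    by (rule rc_rec[OF assms(2) rc_const]) (intro rc_add rc_proj s; simp)
  have eq: "rec_nat 0 (\<lambda>k r. r + F k e) n = (\<Sum>i<n. F i e)" for n e
    by (induction n) auto
  show ?thesis by (rule rc_cong[OF r]) (rule eq[symmetric])
qed


lemmas rc_basic = rc_const rc_proj rc_Suc rc_add rc_sub rc_mult rc_if rc_eq0 rc_not rc_conj rc_disj rc_imp
  rc_eq rc_less rc_le rc_bex rc_ball rc_sum

lemma rc_tri1: "rcomp 1 (\<lambda>e. triangle (e 0))"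
proof -
  have r: "rcomp 1 (\<lambda>e. rec_nat 0 (\<lambda>k r. r + Suc k) (e 0))"
    by (intro rc_rec rc_basic; simp)
  have eq: "rec_nat 0 (\<lambda>k r. r + Suc k) n = triangle n" for n by (induction n) auto
  show ?thesis by (rule rc_cong[OF r]) (rule eq[symmetric])
qed

lemma rc_pe: "rcomp m A \<Longrightarrow> rcomp m B \<Longrightarrow> rcomp m (\<lambda>e. prod_encode (A e, B e))"
proof -
  assume a: "rcomp m A" "rcomp m B"
  have "rcomp m (\<lambda>e. triangle (A e + B e) + A e)"
    by (intro rc_add rc_un[OF rc_tri1] a)
  then show ?thesis by (rule rc_cong) (simp add: prod_encode_def)
qed

definition pfst :: "nat \<Rightarrow> nat" where "pfst n = fst (prod_decode n)"
definition psnd :: "nat \<Rightarrow> nat" where "psnd n = snd (prod_decode n)"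

lemma pfst_pe[simp]: "pfst (prod_encode (a, b)) = a" and psnd_pe[simp]: "psnd (prod_encode (a, b)) = b"
  by (simp_all add: pfst_def psnd_def)

lemma pe_eq_iff: "prod_encode (a, b) = n \<longleftrightarrow> a = pfst n \<and> b = psnd n"
  by (metis pfst_def psnd_def prod.collapse prod_decode_inverse prod_encode_inverse prod.inject)

lemma pfst_le: "pfst n \<le> n" and psnd_le: "psnd n \<le> n"
  by (metis le_prod_encode_1 pe_eq_iff, metis le_prod_encode_2 pe_eq_iff)

lemma pfst_sum: "pfst n = (\<Sum>a<Suc n. \<Sum>b<Suc n. if prod_encode (a, b) = n then a else 0)"
proof -
  have "(\<Sum>a<Suc n. \<Sum>b<Suc n. if prod_encode (a, b) = n then a else 0)
      = (\<Sum>a<Suc n. if a = pfst n then (\<Sum>b<Suc n. if b = psnd n then a else 0) else 0)"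
    unfolding pe_eq_iff by (intro sum.cong) auto
  also have "\<dots> = (\<Sum>a<Suc n. if a = pfst n then a else 0)"
    using psnd_le[of n] by (intro sum.cong) auto
  also have "\<dots> = pfst n" using pfst_le[of n] by simp
  finally show ?thesis by simp
qed

lemma psnd_sum: "psnd n = (\<Sum>a<Suc n. \<Sum>b<Suc n. if prod_encode (a, b) = n then b else 0)"
proof -
  have "(\<Sum>a<Suc n. \<Sum>b<Suc n. if prod_encode (a, b) = n then b else 0)
      = (\<Sum>a<Suc n. if a = pfst n then (\<Sum>b<Suc n. if b = psnd n then b else 0) else 0)"
    unfolding pe_eq_iff by (intro sum.cong) auto
  also have "\<dots> = (\<Sum>a<Suc n. if a = pfst n then psnd n else 0)"
    using psnd_le[of n] by (intro sum.cong) auto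
  also have "\<dots> = psnd n" using pfst_le[of n] by simp
  finally show ?thesis by simp
qed

lemma rc_pfst1: "rcomp 1 (\<lambda>e. pfst (e 0))"
proof -
  have "rcomp 1 (\<lambda>e. \<Sum>a<Suc (e 0). \<Sum>b<Suc (e 0). if prod_encode (a, b) = e 0 then a else 0)"
    by (intro rc_basic rc_pe; simp)
  then show ?thesis by (rule rc_cong) (rule pfst_sum)
qed

lemma rc_psnd1: "rcomp 1 (\<lambda>e. psnd (e 0))"
proof -
  have "rcomp 1 (\<lambda>e. \<Sum>a<Suc (e 0). \<Sum>b<Suc (e 0). if prod_encode (a, b) = e 0 then b else 0)"
    by (intro rc_basic rc_pe; simp)
  then show ?thesis by (rule rc_cong) (rule psnd_sum)
qed

lemma rc_pfst: "rcomp m A \<Longrightarrow> rcomp m (\<lambda>e. pfst (A e))" by (rule rc_un[OF rc_pfst1])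
lemma rc_psnd: "rcomp m A \<Longrightarrow> rcomp m (\<lambda>e. psnd (A e))" by (rule rc_un[OF rc_psnd1])

lemma rc_div2_1: "rcomp 1 (\<lambda>e. e 0 div 2)"
proof -
  have r: "rcomp 1 (\<lambda>e. rec_nat 0 (\<lambda>k r. if Suc k = 2 * Suc r then Suc r else r) (e 0))"
    by (intro rc_rec rc_basic; simp)
  have eq: "rec_nat 0 (\<lambda>k r. if Suc k = 2 * Suc r then Suc r else r) n = n div 2" for n
    by (induction n) auto
  show ?thesis by (rule rc_cong[OF r]) (rule eq[symmetric])
qed

lemma rc_div2: "rcomp m A \<Longrightarrow> rcomp m (\<lambda>e. A e div 2)" by (rule rc_un[OF rc_div2_1])

lemma rc_pow2_1: "rcomp 1 (\<lambda>e. 2 ^ e 0)"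
proof -
  have r: "rcomp 1 (\<lambda>e. rec_nat 1 (\<lambda>k r. r + r) (e 0))"
    by (intro rc_rec rc_basic; simp)
  have eq: "rec_nat 1 (\<lambda>k r. r + r) n = (2::nat) ^ n" for n
    by (induction n) auto
  show ?thesis by (rule rc_cong[OF r]) (rule eq[symmetric])
qed

lemma rc_pow2: "rcomp m A \<Longrightarrow> rcomp m (\<lambda>e. 2 ^ A e)" by (rule rc_un[OF rc_pow2_1])

section \<open>Lists as numbers\<close>

definition hd' :: "nat \<Rightarrow> nat" where "hd' c = pfst (c - 1)"
definition tl' :: "nat \<Rightarrow> nat" where "tl' c = psnd (c - 1)"
definition cons :: "nat \<Rightarrow> nat \<Rightarrow> nat" where "cons x l = Suc (prod_encode (x, l))"

primrec tli :: "nat \<Rightarrow> nat \<Rightarrow> nat" where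
  "tli 0 c = c"
| "tli (Suc k) c = tl' (tli k c)"

definition nth' :: "nat \<Rightarrow> nat \<Rightarrow> nat" where "nth' k c = hd' (tli k c)"

lemma hd'_cons[simp]: "hd' (cons x l) = x" and tl'_cons[simp]: "tl' (cons x l) = l"
  by (simp_all add: hd'_def tl'_def cons_def)

lemma cons_nz[simp]: "cons x l \<noteq> 0" by (simp add: cons_def)

lemma le_Cons: "list_encode (x # xs) = cons x (list_encode xs)" by (simp add: cons_def)

lemma tl'_0[simp]: "tl' 0 = 0"
  by (simp add: tl'_def psnd_def prod_decode_def prod_decode_aux.simps)

lemma tli_le: "tli k (list_encode xs) = list_encode (drop k xs)"
proof (induction k arbitrary: xs)
  case 0 then show ?case by simp
next
  case (Suc k)
  have "tl' (list_encode ys) = list_encode (tl ys)" for ys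
    by (cases ys) (simp_all add: le_Cons del: list_encode.simps(2))
  then show ?case using Suc by (simp add: drop_Suc drop_tl)
qed

lemma tli_nz: "(tli k (list_encode xs) \<noteq> 0) = (k < length xs)"
proof -
  have "list_encode ys = 0 \<longleftrightarrow> ys = []" for ys by (cases ys) auto
  then show ?thesis by (simp add: tli_le not_le)
qed

lemma nth'_le: "k < length xs \<Longrightarrow> nth' k (list_encode xs) = xs ! k"
  by (simp add: nth'_def tli_le Cons_nth_drop_Suc[symmetric] hd'_def)

lemma list_decode_nz: "c \<noteq> 0 \<Longrightarrow> list_decode c = hd' c # list_decode (tl' c)"
  by (cases c) (simp_all add: hd'_def tl'_def pfst_def psnd_def split: prod.split)

lemma length_le_code: "length xs \<le> list_encode xs"
proof (induction xs)
  case Nil then show ?case by simp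
next
  case (Cons x xs)
  have "list_encode xs \<le> prod_encode (x, list_encode xs)" by (rule le_prod_encode_2)
  then show ?case using Cons by simp
qed

lemma rc_hd': "rcomp m A \<Longrightarrow> rcomp m (\<lambda>e. hd' (A e))"
  unfolding hd'_def by (intro rc_pfst rc_basic)
lemma rc_tl': "rcomp m A \<Longrightarrow> rcomp m (\<lambda>e. tl' (A e))"
  unfolding tl'_def by (intro rc_psnd rc_basic)
lemma rc_cons: "rcomp m A \<Longrightarrow> rcomp m B \<Longrightarrow> rcomp m (\<lambda>e. cons (A e) (B e))"
  unfolding cons_def by (intro rc_pe rc_basic)

lemma rc_tli2: "rcomp 2 (\<lambda>e. tli (e 0) (e 1))"
proof -
  have r: "rcomp 2 (\<lambda>e. rec_nat (e 1) (\<lambda>k r. tl' r) (e 0))"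
    by (intro rc_rec rc_tl' rc_basic; simp)
  have eq: "rec_nat c (\<lambda>k r. tl' r) n = tli n c" for n c
    by (induction n) auto
  show ?thesis by (rule rc_cong[OF r]) (rule eq[symmetric])
qed

lemma rc_tli: "rcomp m A \<Longrightarrow> rcomp m B \<Longrightarrow> rcomp m (\<lambda>e. tli (A e) (B e))" by (rule rc_bin[OF rc_tli2])
lemma rc_nth': "rcomp m A \<Longrightarrow> rcomp m B \<Longrightarrow> rcomp m (\<lambda>e. nth' (A e) (B e))"
  unfolding nth'_def by (intro rc_hd' rc_tli)

lemma rc_K2eff: assumes "g \<in> K2eff" "rcomp m A" shows "rcomp m (\<lambda>e. g (A e))"
proof (rule rc_un[OF _ assms(2)])
  from assms(1) obtain p where "\<forall>n. eval (\<lambda>_. 0) p [n] (g n)" by (auto simp: K2eff_def)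
  then show "rcomp 1 (\<lambda>e. g (e 0))" unfolding rcomp_def by (intro exI[of _ p]) simp
qed


primrec code :: "prog \<Rightarrow> nat" where
  "code Zero = prod_encode (0, 0)"
| "code Succ = prod_encode (1, 0)"
| "code (Proj i) = prod_encode (2, i)"
| "code Orc = prod_encode (3, 0)"
| "code (Comp f gs) = prod_encode (4, prod_encode (code f, list_encode (map code gs)))"
| "code (PrimRec f g) = prod_encode (5, prod_encode (code f, code g))"
| "code (Mu f) = prod_encode (6, code f)"

lemma code_inj: "code p = code q \<Longrightarrow> p = q"
proof (induction p arbitrary: q)
  case (Comp f gs)
  then show ?case
  proof (cases q)
    case (Comp f' gs')
    with Comp.prems have "code f = code f'" and m: "map code gs = map code gs'"
      by (auto simp: list_encode_eq)
    then have "f = f'" using Comp.IH(1) by blast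
    moreover have "gs = gs'"
    proof -
      have "length gs = length gs'" using m by (metis length_map)
      moreover have "\<forall>i<length gs. gs ! i = gs' ! i"
        using m Comp.IH(2) by (metis nth_map nth_mem calculation)
      ultimately show ?thesis by (simp add: list_eq_iff_nth_eq)
    qed
    ultimately show ?thesis using Comp by simp
  qed auto
qed (case_tac q; auto)+


definition key :: "nat \<Rightarrow> nat \<Rightarrow> nat \<Rightarrow> nat" where
  "key md pc xsc = prod_encode (md, prod_encode (pc, xsc))"
definition jd :: "nat \<Rightarrow> nat \<Rightarrow> nat \<Rightarrow> nat \<Rightarrow> nat" where
  "jd md pc xsc y = prod_encode (key md pc xsc, y)"

locale cparams =
  fixes fS fP h0 :: "nat \<Rightarrow> nat" and cqS :: nat
begin

definition orcok :: "(nat \<Rightarrow> bool) \<Rightarrow> nat \<Rightarrow> nat \<Rightarrow> nat \<Rightarrow> bool" where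
  "orcok E1 md x y \<longleftrightarrow>
   (md = 0 \<and> y = 0) \<or>
   (md \<noteq> 0 \<and> 2 * (x div 2) = x \<and> y = (if 2 * ((md - 1) div 2) = md - 1 then fS (x div 2) else fP (x div 2))) \<or>
   (md \<noteq> 0 \<and> 2 * (x div 2) \<noteq> x \<and> (md - 1) div 2 = 0 \<and> y = h0 (x div 2)) \<or>
   (md \<noteq> 0 \<and> 2 * (x div 2) \<noteq> x \<and> (md - 1) div 2 \<noteq> 0 \<and>
      E1 (jd (2 * ((md - 1) div 2 - 1) + 1) cqS (cons (x div 2) 0) y))"

definition okd :: "(nat \<Rightarrow> bool) \<Rightarrow> (nat \<Rightarrow> bool) \<Rightarrow> nat \<Rightarrow> nat \<Rightarrow> nat \<Rightarrow> nat \<Rightarrow> nat \<Rightarrow> bool" where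
  "okd E1 E2 md pc xsc y aux \<longleftrightarrow>
   (pfst pc = 0 \<and> y = 0) \<or>
   (pfst pc = 1 \<and> xsc \<noteq> 0 \<and> y = Suc (hd' xsc)) \<or>
   (pfst pc = 2 \<and> tli (psnd pc) xsc \<noteq> 0 \<and> y = nth' (psnd pc) xsc) \<or>
   (pfst pc = 3 \<and> xsc \<noteq> 0 \<and> orcok E1 md (hd' xsc) y) \<or>
   (pfst pc = 4 \<and> (\<forall>t < psnd (psnd pc) + aux. (tli t (psnd (psnd pc)) = 0) = (tli t aux = 0)) \<and>
      (\<forall>t < psnd (psnd pc). tli t (psnd (psnd pc)) \<noteq> 0 \<longrightarrow> E1 (jd md (nth' t (psnd (psnd pc))) xsc (nth' t aux))) \<and>
      E1 (jd md (pfst (psnd pc)) aux y)) \<or>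
   (pfst pc = 5 \<and> xsc \<noteq> 0 \<and> hd' xsc = 0 \<and> E1 (jd md (pfst (psnd pc)) (tl' xsc) y)) \<or>
   (pfst pc = 5 \<and> xsc \<noteq> 0 \<and> hd' xsc \<noteq> 0 \<and> E1 (jd md pc (cons (hd' xsc - 1) (tl' xsc)) aux) \<and>
      E1 (jd md (psnd (psnd pc)) (cons (hd' xsc - 1) (cons aux (tl' xsc))) y)) \<or>
   (pfst pc = 6 \<and> E1 (jd md (psnd pc) (cons y xsc) 0) \<and> (\<forall>z<y. E2 (key md (psnd pc) (cons z xsc))))"

definition ok :: "(nat \<Rightarrow> bool) \<Rightarrow> (nat \<Rightarrow> bool) \<Rightarrow> nat \<Rightarrow> bool" where
  "ok E1 E2 ent = okd E1 E2 (pfst (pfst (pfst ent))) (pfst (psnd (pfst (pfst ent)))) (psnd (psnd (pfst (pfst ent))))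
      (psnd (pfst ent)) (psnd ent)"

lemma ok_ent: "ok E1 E2 (prod_encode (jd md pc xsc y, aux)) = okd E1 E2 md pc xsc y aux"
  by (simp add: ok_def jd_def key_def)

lemma orcok_mono: "orcok E1 md x y \<Longrightarrow> (\<And>J. E1 J \<Longrightarrow> E1' J) \<Longrightarrow> orcok E1' md x y"
  unfolding orcok_def by blast

lemma okd_mono: "okd E1 E2 md pc xsc y aux \<Longrightarrow> (\<And>J. E1 J \<Longrightarrow> E1' J) \<Longrightarrow> (\<And>K. E2 K \<Longrightarrow> E2' K)
   \<Longrightarrow> okd E1' E2' md pc xsc y aux"
  proof -
  assume a: "okd E1 E2 md pc xsc y aux" and m1: "\<And>J. E1 J \<Longrightarrow> E1' J" and m2: "\<And>K. E2 K \<Longrightarrow> E2' K"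
  have m3: "orcok E1 md x v \<Longrightarrow> orcok E1' md x v" for x v using orcok_mono m1 by blast
  show ?thesis using a unfolding okd_def
    apply (elim disjE)
    apply (rule disjI1; simp)
    apply (rule disjI2, rule disjI1; simp)
    apply (rule disjI2, rule disjI2, rule disjI1; simp)
    apply (rule disjI2, rule disjI2, rule disjI2, rule disjI1; blast intro: m3)
    apply (rule disjI2, rule disjI2, rule disjI2, rule disjI2, rule disjI1; blast intro: m1)
    apply (rule disjI2, rule disjI2, rule disjI2, rule disjI2, rule disjI2, rule disjI1; blast intro: m1)
    apply (rule disjI2, rule disjI2, rule disjI2, rule disjI2, rule disjI2, rule disjI2, rule disjI1; blast intro: m1)
    apply (rule disjI2, rule disjI2, rule disjI2, rule disjI2, rule disjI2, rule disjI2, rule disjI2; blast intro: m1 m2)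
    done
qed

lemma ok_mono: "ok E1 E2 ent \<Longrightarrow> (\<And>J. E1 J \<Longrightarrow> E1' J) \<Longrightarrow> (\<And>K. E2 K \<Longrightarrow> E2' K) \<Longrightarrow> ok E1' E2' ent"
  unfolding ok_def by (rule okd_mono)

definition E1A :: "nat \<Rightarrow> nat \<Rightarrow> nat \<Rightarrow> bool" where
  "E1A c i J \<longleftrightarrow> (\<exists>j<i. pfst (nth' j c) = J)"
definition E2A :: "nat \<Rightarrow> nat \<Rightarrow> nat \<Rightarrow> bool" where
  "E2A c i K \<longleftrightarrow> (\<exists>j<i. pfst (pfst (nth' j c)) = K \<and> psnd (pfst (nth' j c)) \<noteq> 0)"

definition valid_c :: "nat \<Rightarrow> bool" where
  "valid_c c \<longleftrightarrow> (\<forall>i<c. tli i c \<noteq> 0 \<longrightarrow> ok (E1A c i) (E2A c i) (nth' i c))"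

definition E1L :: "nat list \<Rightarrow> nat \<Rightarrow> bool" where
  "E1L es J \<longleftrightarrow> (\<exists>x\<in>set es. pfst x = J)"
definition E2L :: "nat list \<Rightarrow> nat \<Rightarrow> bool" where
  "E2L es K \<longleftrightarrow> (\<exists>x\<in>set es. pfst (pfst x) = K \<and> psnd (pfst x) \<noteq> 0)"

definition valid :: "nat list \<Rightarrow> bool" where
  "valid es \<longleftrightarrow> (\<forall>i<length es. ok (E1L (take i es)) (E2L (take i es)) (es ! i))"

lemma set_take_conv: "i \<le> length es \<Longrightarrow> (\<exists>x\<in>set (take i es). P x) \<longleftrightarrow> (\<exists>j<i. P (es ! j))"
proof
  assume a: "i \<le> length es"
  assume "\<exists>x\<in>set (take i es). P x"
  then obtain j where "j < length (take i es)" "P (take i es ! j)" by (auto simp: in_set_conv_nth)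
  then show "\<exists>j<i. P (es ! j)" using a by auto
next
  assume a: "i \<le> length es"
  assume "\<exists>j<i. P (es ! j)"
  then obtain j where j: "j < i" "P (es ! j)" by auto
  then have "take i es ! j \<in> set (take i es)" using a by (intro nth_mem) simp
  then show "\<exists>x\<in>set (take i es). P x" using j by auto
qed

lemma E1A_le: "i < length es \<Longrightarrow> E1A (list_encode es) i = E1L (take i es)"
  unfolding E1A_def E1L_def fun_eq_iff by (subst set_take_conv) (auto simp: nth'_le)

lemma E2A_le: "i < length es \<Longrightarrow> E2A (list_encode es) i = E2L (take i es)"
  unfolding E2A_def E2L_def fun_eq_iff by (subst set_take_conv) (auto simp: nth'_le)

lemma valid_c_le: "valid_c (list_encode es) \<longleftrightarrow> valid es"
proof -
  have t: "0 < tli i (list_encode es) \<longleftrightarrow> i < length es" for i using tli_nz[of i es] by simp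
  have p: "(i < list_encode es \<longrightarrow> tli i (list_encode es) \<noteq> 0 \<longrightarrow> ok (E1A (list_encode es) i) (E2A (list_encode es) i) (nth' i (list_encode es)))
      \<longleftrightarrow> (i < length es \<longrightarrow> ok (E1L (take i es)) (E2L (take i es)) (es ! i))" for i
  proof (cases "i < length es")
    case True
    then show ?thesis using length_le_code[of es] by (simp add: t E1A_le E2A_le nth'_le)
  next
    case False
    then show ?thesis by (simp add: t)
  qed
  show ?thesis unfolding valid_c_def valid_def by (simp only: p)
qed

end


lemma rc_iff: "rcomp m (\<lambda>e. of_bool (P e)) \<Longrightarrow> rcomp m (\<lambda>e. of_bool (Q e)) \<Longrightarrow> rcomp m (\<lambda>e. of_bool (P e = Q e))"
  by (drule (1) rc_eq) (erule rc_cong; simp)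

context cparams begin

lemma rc_okd:
  assumes fS: "\<And>m A. rcomp m A \<Longrightarrow> rcomp m (\<lambda>e. fS (A e))"
    and fP: "\<And>m A. rcomp m A \<Longrightarrow> rcomp m (\<lambda>e. fP (A e))"
    and h0: "\<And>m A. rcomp m A \<Longrightarrow> rcomp m (\<lambda>e. h0 (A e))"
  shows "rcomp 7 (\<lambda>e. of_bool (okd (E1A (e 0) (e 1)) (E2A (e 0) (e 1)) (e 2) (e 3) (e 4) (e 5) (e 6)))"
  unfolding okd_def orcok_def E1A_def E2A_def jd_def key_def
  by (intro rc_basic rc_iff rc_pe rc_pfst rc_psnd rc_hd' rc_tl' rc_cons rc_tli rc_nth' rc_div2 fS fP h0; simp)

lemma rc_ok2:
  assumes fS: "\<And>m A. rcomp m A \<Longrightarrow> rcomp m (\<lambda>e. fS (A e))"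
    and fP: "\<And>m A. rcomp m A \<Longrightarrow> rcomp m (\<lambda>e. fP (A e))"
    and h0: "\<And>m A. rcomp m A \<Longrightarrow> rcomp m (\<lambda>e. h0 (A e))"
  shows "rcomp 2 (\<lambda>e. of_bool (ok (E1A (e 0) (e 1)) (E2A (e 0) (e 1)) (nth' (e 1) (e 0))))"
proof -
  let ?ent = "\<lambda>e::nat\<Rightarrow>nat. nth' (e 1) (e 0)"
  let ?Fs = "\<lambda>i::nat. if i = 0 then (\<lambda>e::nat\<Rightarrow>nat. e 0) else if i = 1 then (\<lambda>e. e 1)
     else if i = 2 then (\<lambda>e. pfst (pfst (pfst (?ent e))))
     else if i = 3 then (\<lambda>e. pfst (psnd (pfst (pfst (?ent e)))))
     else if i = 4 then (\<lambda>e. psnd (psnd (pfst (pfst (?ent e)))))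
     else if i = 5 then (\<lambda>e. psnd (pfst (?ent e))) else (\<lambda>e. psnd (?ent e))"
  have "\<forall>i<7. rcomp 2 (?Fs i)"
    apply (intro allI impI)
    apply (simp add: less_Suc_eq numeral_eq_Suc)
    apply (elim disjE; simp; intro rc_basic rc_pfst rc_psnd rc_nth'; simp)
    done
  from rc_comp[OF rc_okd[OF fS fP h0] this]
  show ?thesis apply (rule rc_cong) apply (simp_all add: ok_def) done
qed

lemma rc_ok:
  assumes fS: "\<And>m A. rcomp m A \<Longrightarrow> rcomp m (\<lambda>e. fS (A e))"
    and fP: "\<And>m A. rcomp m A \<Longrightarrow> rcomp m (\<lambda>e. fP (A e))"
    and h0: "\<And>m A. rcomp m A \<Longrightarrow> rcomp m (\<lambda>e. h0 (A e))"
  shows "rcomp m C \<Longrightarrow> rcomp m I \<Longrightarrow> rcomp m (\<lambda>e. of_bool (ok (E1A (C e) (I e)) (E2A (C e) (I e)) (nth' (I e) (C e))))"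
  by (rule rc_bin[OF rc_ok2[OF fS fP h0]])

lemma rc_valid:
  assumes fS: "\<And>m A. rcomp m A \<Longrightarrow> rcomp m (\<lambda>e. fS (A e))"
    and fP: "\<And>m A. rcomp m A \<Longrightarrow> rcomp m (\<lambda>e. fP (A e))"
    and h0: "\<And>m A. rcomp m A \<Longrightarrow> rcomp m (\<lambda>e. h0 (A e))"
    and C: "rcomp m C"
  shows "rcomp m (\<lambda>e. of_bool (valid_c (C e)))"
  unfolding valid_c_def
  by (intro rc_basic rc_tli rc_ok[OF fS fP h0] C rc_shift1[OF C]; simp)

definition has_c :: "nat \<Rightarrow> nat \<Rightarrow> bool" where
  "has_c c J \<longleftrightarrow> (\<exists>i<c. tli i c \<noteq> 0 \<and> pfst (nth' i c) = J)"

definition haskey_c :: "nat \<Rightarrow> nat \<Rightarrow> bool" where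
  "haskey_c c K \<longleftrightarrow> (\<exists>i<c. tli i c \<noteq> 0 \<and> pfst (pfst (nth' i c)) = K)"

lemma rc_has: assumes C: "rcomp m C" and J: "rcomp m J" shows "rcomp m (\<lambda>e. of_bool (has_c (C e) (J e)))"
  unfolding has_c_def by (intro rc_basic rc_tli rc_nth' rc_pfst C J rc_shift1[OF C] rc_shift1[OF J]; simp)

lemma rc_haskey: assumes C: "rcomp m C" and J: "rcomp m J" shows "rcomp m (\<lambda>e. of_bool (haskey_c (C e) (J e)))"
  unfolding haskey_c_def by (intro rc_basic rc_tli rc_nth' rc_pfst C J rc_shift1[OF C] rc_shift1[OF J]; simp)

lemma tli_pos: "0 < tli k (list_encode xs) \<longleftrightarrow> k < length xs"
  using tli_nz[of k xs] by simp

lemma ex_code_conv: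
  "(\<exists>i<list_encode es. tli i (list_encode es) \<noteq> 0 \<and> P (nth' i (list_encode es))) \<longleftrightarrow> (\<exists>x\<in>set es. P x)"
proof
  assume "\<exists>i<list_encode es. tli i (list_encode es) \<noteq> 0 \<and> P (nth' i (list_encode es))"
  then obtain i where "tli i (list_encode es) \<noteq> 0" "P (nth' i (list_encode es))" by blast
  then have "i < length es" "P (es ! i)" by (auto simp: tli_pos nth'_le)
  then show "\<exists>x\<in>set es. P x" by (meson nth_mem)
next
  assume "\<exists>x\<in>set es. P x"
  then obtain i where i: "i < length es" "P (es ! i)" by (auto simp: in_set_conv_nth)
  then have "i < list_encode es" using length_le_code[of es] by linarith
  then show "\<exists>i<list_encode es. tli i (list_encode es) \<noteq> 0 \<and> P (nth' i (list_encode es))"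
    using i by (intro exI[of _ i]) (simp add: tli_pos nth'_le)
qed

lemma has_c_le: "has_c (list_encode es) J \<longleftrightarrow> E1L es J"
  unfolding has_c_def E1L_def by (rule ex_code_conv)

lemma haskey_c_le: "haskey_c (list_encode es) K \<longleftrightarrow> (\<exists>x\<in>set es. pfst (pfst x) = K)"
  unfolding haskey_c_def by (rule ex_code_conv)

end


lemma list_decode_cons[simp]: "list_decode (cons a l) = a # list_decode l"
  by (simp add: cons_def)

lemma even_div2_iff: "(2 * (x div 2) = x) \<longleftrightarrow> even (x::nat)"
  by presburger

context cparams begin

lemma E1L_mono: "E1L es J \<Longrightarrow> set es \<subseteq> set es' \<Longrightarrow> E1L es' J"
  unfolding E1L_def by blast
lemma E2L_mono: "E2L es J \<Longrightarrow> set es \<subseteq> set es' \<Longrightarrow> E2L es' J"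
  unfolding E2L_def by blast

lemma valid_append: "valid es1 \<Longrightarrow> valid es2 \<Longrightarrow> valid (es1 @ es2)"
  unfolding valid_def
proof (intro allI impI)
  fix i assume v1: "\<forall>i<length es1. ok (E1L (take i es1)) (E2L (take i es1)) (es1 ! i)"
    and v2: "\<forall>i<length es2. ok (E1L (take i es2)) (E2L (take i es2)) (es2 ! i)"
    and i: "i < length (es1 @ es2)"
  show "ok (E1L (take i (es1 @ es2))) (E2L (take i (es1 @ es2))) ((es1 @ es2) ! i)"
  proof (cases "i < length es1")
    case True then show ?thesis using v1 by (simp add: nth_append)
  next
    case False
    define k where "k = i - length es1"
    have k: "k < length es2" "i = length es1 + k" using False i by (auto simp: k_def)
    have "ok (E1L (take k es2)) (E2L (take k es2)) (es2 ! k)" using v2 k by auto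
    moreover have "set (take k es2) \<subseteq> set (take i (es1 @ es2))" using k by auto
    ultimately show ?thesis using k
      by (auto simp: nth_append elim!: ok_mono intro: E1L_mono E2L_mono)
  qed
qed

lemma add_entry:
  assumes "valid es" "okd (E1L es) (E2L es) md pc xsc y aux"
  shows "valid (es @ [prod_encode (jd md pc xsc y, aux)]) \<and> E1L (es @ [prod_encode (jd md pc xsc y, aux)]) (jd md pc xsc y)"
proof
  show "valid (es @ [prod_encode (jd md pc xsc y, aux)])"
    using assms unfolding valid_def by (auto simp: nth_append less_Suc_eq ok_ent)
  show "E1L (es @ [prod_encode (jd md pc xsc y, aux)]) (jd md pc xsc y)"
    by (simp add: E1L_def)
qed

lemma family:
  fixes n :: nat
  assumes "\<forall>t<n. \<exists>es. valid es \<and> Q t es" and "\<And>t es es'. Q t es \<Longrightarrow> set es \<subseteq> set es' \<Longrightarrow> Q t es'"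
  shows "\<exists>es. valid es \<and> (\<forall>t<n. Q t es)"
  using assms(1)
proof (induction n)
  case 0 then show ?case by (intro exI[of _ "[]"]) (simp add: valid_def)
next
  case (Suc n)
  then obtain es1 where es1: "valid es1" "\<forall>t<n. Q t es1" by auto
  obtain es2 where es2: "valid es2" "Q n es2" using Suc.prems by auto
  have "valid (es1 @ es2)" by (rule valid_append[OF es1(1) es2(1)])
  moreover have "\<forall>t<Suc n. Q t (es1 @ es2)"
    using es1(2) es2(2) assms(2) by (auto simp: less_Suc_eq)
  ultimately show ?case by blast
qed

end


locale csem = cparams fS fP h0 "code qS" for fS fP h0 :: "nat \<Rightarrow> nat" and qS :: prog +
  fixes H :: "nat \<Rightarrow> nat \<Rightarrow> nat"
  assumes H0: "H 0 = h0" and HS: "\<And>l n. eval (join fS (H l)) qS [n] (H (Suc l) n)"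
begin

definition orc :: "nat \<Rightarrow> nat \<Rightarrow> nat" where
  "orc md = (if md = 0 then (\<lambda>_. 0) else join (if 2 * ((md - 1) div 2) = md - 1 then fS else fP) (H ((md - 1) div 2)))"

lemma orc_S: "orc (2 * l + 1) = join fS (H l)"
  by (simp add: orc_def)

lemma orc_P: "orc (2 * l + 2) = join fP (H l)"
proof -
  have "2 * ((2 * l + 2 - 1) div 2) \<noteq> 2 * l + 2 - 1" by presburger
  moreover have "(2 * l + 2 - 1) div 2 = l" by presburger
  ultimately show ?thesis by (simp add: orc_def)
qed

lemma sound:
  assumes v: "valid es"
  shows "i < length es \<Longrightarrow> pfst (es ! i) = jd md (code p) xsc y \<Longrightarrow> eval (orc md) p (list_decode xsc) y"
proof (induction i arbitrary: md p xsc y rule: less_induct)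
  case (less i)
  define aux where "aux = psnd (es ! i)"
  have ent: "es ! i = prod_encode (jd md (code p) xsc y, aux)"
    using less.prems(2) unfolding aux_def by (metis pe_eq_iff)
  have "ok (E1L (take i es)) (E2L (take i es)) (es ! i)" using v less.prems(1) by (simp add: valid_def)
  then have OK: "okd (E1L (take i es)) (E2L (take i es)) md (code p) xsc y aux" by (simp add: ent ok_ent)
  have E1: "eval (orc md') p' (list_decode xsc') y'" if "E1L (take i es) (jd md' (code p') xsc' y')" for md' p' xsc' y'
  proof -
    from that obtain j where j: "j < i" "pfst (es ! j) = jd md' (code p') xsc' y'"
      unfolding E1L_def using set_take_conv[of i es "\<lambda>x. pfst x = jd md' (code p') xsc' y'"] less.prems(1) by auto
    then show ?thesis using less.IH[of j] less.prems(1) by auto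
  qed
  have E2: "\<exists>v. v \<noteq> 0 \<and> eval (orc md') p' (list_decode xsc') v" if "E2L (take i es) (key md' (code p') xsc')" for md' p' xsc'
  proof -
    from that obtain j where j: "j < i" "pfst (pfst (es ! j)) = key md' (code p') xsc'" "psnd (pfst (es ! j)) \<noteq> 0"
      unfolding E2L_def using set_take_conv[of i es "\<lambda>x. pfst (pfst x) = key md' (code p') xsc' \<and> psnd (pfst x) \<noteq> 0"] less.prems(1) by auto
    then have "pfst (es ! j) = jd md' (code p') xsc' (psnd (pfst (es ! j)))" unfolding jd_def by (metis pe_eq_iff)
    then show ?thesis using less.IH[of j] less.prems(1) j by auto
  qed
  show ?case
  proof (cases p)
    case Zero
    then show ?thesis using OK by (simp add: okd_def ev_zero)
  next
    case Succ
    then have "xsc \<noteq> 0" "y = Suc (hd' xsc)" using OK by (simp_all add: okd_def)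
    then show ?thesis using Succ by (simp add: list_decode_nz ev_succ)
  next
    case (Proj j)
    then have "tli j xsc \<noteq> 0" "y = nth' j xsc" using OK by (simp_all add: okd_def)
    moreover obtain xs where xs: "xsc = list_encode xs" by (metis list_decode_inverse)
    ultimately show ?thesis using Proj by (simp add: tli_pos nth'_le ev_proj)
  next
    case Orc
    then have nz: "xsc \<noteq> 0" and oo: "orcok (E1L (take i es)) md (hd' xsc) y" using OK by (simp_all add: okd_def)
    define x where "x = hd' xsc"
    have "y = orc md x"
      using oo unfolding orcok_def x_def[symmetric]
    proof (elim disjE conjE)
      assume "md = 0" "y = 0" then show ?thesis by (simp add: orc_def)
    next
      assume a: "md \<noteq> 0" "2 * (x div 2) = x" "y = (if 2 * ((md - 1) div 2) = md - 1 then fS (x div 2) else fP (x div 2))"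
      then show ?thesis by (simp add: orc_def join_def even_div2_iff)
    next
      assume a: "md \<noteq> 0" "2 * (x div 2) \<noteq> x" "(md - 1) div 2 = 0" "y = h0 (x div 2)"
      then show ?thesis by (simp add: orc_def join_def even_div2_iff H0)
    next
      assume a: "md \<noteq> 0" "2 * (x div 2) \<noteq> x" "(md - 1) div 2 \<noteq> 0"
        "E1L (take i es) (jd (2 * ((md - 1) div 2 - 1) + 1) (code qS) (cons (x div 2) 0) y)"
      define l where "l = (md - 1) div 2 - 1"
      have "eval (orc (2 * l + 1)) qS [x div 2] y" using E1[OF a(4)[folded l_def]] by simp
      then have "eval (join fS (H l)) qS [x div 2] y" by (simp only: orc_S)
      then have "y = H (Suc l) (x div 2)" using HS eval_det by blast
      moreover have "Suc l = (md - 1) div 2" using a(3) by (simp add: l_def)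
      ultimately show ?thesis using a by (simp add: orc_def join_def even_div2_iff)
    qed
    then show ?thesis using Orc nz by (simp add: list_decode_nz x_def ev_orc)
  next
    case (Comp f gs)
    define gsc where "gsc = list_encode (map code gs)"
    define ys where "ys = list_decode aux"
    have auxe: "aux = list_encode ys" by (simp add: ys_def)
    have C: "(\<forall>t < gsc + aux. (tli t gsc = 0) = (tli t aux = 0)) \<and>
      (\<forall>t < gsc. tli t gsc \<noteq> 0 \<longrightarrow> E1L (take i es) (jd md (nth' t gsc) xsc (nth' t aux))) \<and>
      E1L (take i es) (jd md (code f) aux y)"
      using OK unfolding okd_def Comp gsc_def
      apply (simp only: code.simps pfst_pe psnd_pe)
      apply (elim disjE; (simp; fail)?)
      apply blast
      done
    then have L: "\<forall>t < gsc + aux. (tli t gsc = 0) = (tli t aux = 0)"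
      and A: "\<forall>t < gsc. tli t gsc \<noteq> 0 \<longrightarrow> E1L (take i es) (jd md (nth' t gsc) xsc (nth' t aux))"
      and F: "E1L (take i es) (jd md (code f) aux y)" by blast+
    have len: "length ys = length gs"
    proof (rule ccontr)
      assume "length ys \<noteq> length gs"
      define t where "t = min (length ys) (length gs)"
      have "t < gsc + aux" using length_le_code[of ys] length_le_code[of "map code gs"] \<open>length ys \<noteq> length gs\<close>
        by (auto simp: t_def gsc_def auxe)
      then have "(tli t gsc = 0) = (tli t aux = 0)" using L by blast
      then show False using \<open>length ys \<noteq> length gs\<close> tli_nz[of t "map code gs"] tli_nz[of t ys]
        by (auto simp: t_def gsc_def auxe min_def split: if_splits)
    qed
    have "list_all2 (\<lambda>g. eval (orc md) g (list_decode xsc)) gs ys"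
    proof (rule list_all2_all_nthI)
      show "length gs = length ys" using len by simp
      fix t assume t: "t < length gs"
      then have "t < gsc" using length_le_code[of "map code gs"] by (simp add: gsc_def)
      moreover have "tli t gsc \<noteq> 0" using t tli_nz[of t "map code gs"] by (simp add: gsc_def)
      ultimately have "E1L (take i es) (jd md (nth' t gsc) xsc (nth' t aux))" using A by blast
      then have "E1L (take i es) (jd md (code (gs ! t)) xsc (ys ! t))"
        using t len by (simp add: gsc_def auxe nth'_le)
      then show "eval (orc md) (gs ! t) (list_decode xsc) (ys ! t)" by (rule E1)
    qed
    moreover have "eval (orc md) f ys y" using E1[OF F] by (simp add: ys_def)
    ultimately show ?thesis using Comp by (simp add: ev_comp)
  next
    case (PrimRec f g)
    from OK PrimRec have nz: "xsc \<noteq> 0" and C: "(hd' xsc = 0 \<and> E1L (take i es) (jd md (code f) (tl' xsc) y)) \<or>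
      (hd' xsc \<noteq> 0 \<and> E1L (take i es) (jd md (code p) (cons (hd' xsc - 1) (tl' xsc)) aux) \<and>
       E1L (take i es) (jd md (code g) (cons (hd' xsc - 1) (cons aux (tl' xsc))) y))"
      by (auto simp: okd_def)
    have xs: "list_decode xsc = hd' xsc # list_decode (tl' xsc)" using nz by (rule list_decode_nz)
    from C show ?thesis
    proof (elim disjE conjE)
      assume "hd' xsc = 0" "E1L (take i es) (jd md (code f) (tl' xsc) y)"
      then show ?thesis using E1 PrimRec xs by (simp add: ev_pr0)
    next
      assume a: "hd' xsc \<noteq> 0" "E1L (take i es) (jd md (code p) (cons (hd' xsc - 1) (tl' xsc)) aux)"
        "E1L (take i es) (jd md (code g) (cons (hd' xsc - 1) (cons aux (tl' xsc))) y)"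
      obtain n where n: "hd' xsc = Suc n" using a(1) by (cases "hd' xsc") auto
      have "eval (orc md) p (n # list_decode (tl' xsc)) aux" using E1[OF a(2)] n by simp
      moreover have "eval (orc md) g (n # aux # list_decode (tl' xsc)) y" using E1[OF a(3)] n by simp
      ultimately show ?thesis using PrimRec xs n by (simp add: ev_prS)
    qed
  next
    case (Mu f)
    from OK Mu have a: "E1L (take i es) (jd md (code f) (cons y xsc) 0)"
      and b: "\<forall>z<y. E2L (take i es) (key md (code f) (cons z xsc))"
      by (simp_all add: okd_def)
    have "eval (orc md) f (y # list_decode xsc) 0" using E1[OF a] by simp
    moreover have "\<forall>z<y. \<exists>v. v \<noteq> 0 \<and> eval (orc md) f (z # list_decode xsc) v"
      using b E2 by fastforce
    ultimately show ?thesis using Mu by (simp add: ev_mu)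
  qed
qed

end


lemma hd'_Suc_pe[simp]: "hd' (Suc (prod_encode (x, l))) = x" and tl'_Suc_pe[simp]: "tl' (Suc (prod_encode (x, l))) = l"
  by (simp_all add: hd'_def tl'_def)

lemma tli_zero: "(tli k (list_encode xs) = 0) \<longleftrightarrow> length xs \<le> k"
  using tli_nz[of k xs] by linarith

context cparams begin

lemma valid_Nil: "valid []" by (simp add: valid_def)

lemma add_entry_ex: "valid es \<Longrightarrow> okd (E1L es) (E2L es) md pc xsc y aux \<Longrightarrow> \<exists>es'. valid es' \<and> E1L es' (jd md pc xsc y)"
  using add_entry by blast

end

context csem begin

lemma complete_aux:
  "\<forall>p xs y. eval (orc md) p xs y \<longrightarrow> (\<exists>es. valid es \<and> E1L es (jd md (code p) (list_encode xs) y))"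
proof (induction md rule: less_induct)
  case (less md)
  show ?case
  proof (intro allI impI)
    fix p xs y assume "eval (orc md) p xs y"
    then show "\<exists>es. valid es \<and> E1L es (jd md (code p) (list_encode xs) y)"
    proof (induction rule: eval.induct)
      case (ev_zero xs)
      have "okd (E1L []) (E2L []) md (code Zero) (list_encode xs) 0 0" by (simp add: okd_def)
      then show ?case using add_entry_ex[OF valid_Nil] by blast
    next
      case (ev_succ x xs)
      have "okd (E1L []) (E2L []) md (code Succ) (list_encode (x # xs)) (Suc x) 0" by (simp add: okd_def le_Cons)
      then show ?case using add_entry_ex[OF valid_Nil] by blast
    next
      case (ev_proj i xs)
      have "okd (E1L []) (E2L []) md (code (Proj i)) (list_encode xs) (xs ! i) 0"
        using ev_proj by (simp add: okd_def tli_pos nth'_le)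
      then show ?case using add_entry_ex[OF valid_Nil] by blast
    next
      case (ev_orc x xs)
      have "\<exists>es. valid es \<and> orcok (E1L es) md x (orc md x)"
      proof (cases "md = 0")
        case True then show ?thesis by (intro exI[of _ "[]"]) (simp add: valid_def orcok_def orc_def)
      next
        case md: False
        show ?thesis
        proof (cases "even x")
          case True then show ?thesis using md
            by (intro exI[of _ "[]"]) (simp add: valid_def orcok_def orc_def join_def even_div2_iff)
        next
          case odd: False
          show ?thesis
          proof (cases "(md - 1) div 2 = 0")
            case True
            have o1: "2 * (x div 2) \<noteq> x" using odd by presburger
            have o2: "orc md x = h0 (x div 2)" using md odd True by (simp add: orc_def join_def H0)
            have "orcok (E1L []) md x (orc md x)" unfolding orcok_def using md o1 True o2 by blast
            then show ?thesis using valid_Nil by blast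
          next
            case False
            define l where "l = (md - 1) div 2 - 1"
            have lS: "Suc l = (md - 1) div 2" using False by (simp add: l_def)
            have lt: "2 * l + 1 < md" using False md by (simp add: l_def)
            have "eval (orc (2 * l + 1)) qS [x div 2] (H (Suc l) (x div 2))"
              by (simp only: orc_S HS)
            then obtain es where es: "valid es" "E1L es (jd (2 * l + 1) (code qS) (list_encode [x div 2]) (H (Suc l) (x div 2)))"
              using less.IH[OF lt] by blast
            have "orc md x = H (Suc l) (x div 2)" using md odd lS by (simp add: orc_def join_def)
            moreover have "list_encode [x div 2] = cons (x div 2) 0" by (simp add: cons_def)
            ultimately have E: "E1L es (jd (2 * ((md - 1) div 2 - 1) + 1) (code qS) (cons (x div 2) 0) (orc md x))"
              using es(2) by (simp add: l_def)
            have o1: "2 * (x div 2) \<noteq> x" using odd by presburger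
            have "orcok (E1L es) md x (orc md x)" unfolding orcok_def using md o1 False E by blast
            then show ?thesis using es(1) by blast
          qed
        qed
      qed
      then obtain es where es: "valid es" "orcok (E1L es) md x (orc md x)" by blast
      have "okd (E1L es) (E2L es) md (code Orc) (list_encode (x # xs)) (orc md x) 0"
        using es(2) by (simp add: okd_def le_Cons)
      then show ?case using add_entry_ex[OF es(1)] by blast
    next
      case (ev_comp xs gs ys f z)
      have "\<forall>t<length gs. \<exists>es. valid es \<and> E1L es (jd md (code (gs ! t)) (list_encode xs) (ys ! t))"
        using ev_comp.IH(1) by (auto simp: list_all2_conv_all_nth)
      from family[OF this] obtain es1 where es1: "valid es1" "\<forall>t<length gs. E1L es1 (jd md (code (gs ! t)) (list_encode xs) (ys ! t))"
        using E1L_mono by blast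
      obtain es2 where es2: "valid es2" "E1L es2 (jd md (code f) (list_encode ys) z)" using ev_comp.IH(2) by blast
      define es where "es = es1 @ es2"
      have v: "valid es" unfolding es_def by (rule valid_append[OF es1(1) es2(1)])
      have len: "length ys = length gs" using ev_comp.IH(1) by (simp add: list_all2_conv_all_nth)
      let ?gsc = "psnd (psnd (code (Comp f gs)))"
      have gsc: "?gsc = list_encode (map code gs)" by simp
      have T: "pfst (code (Comp f gs)) = 4" by simp
      have L: "\<forall>t < ?gsc + list_encode ys. (tli t ?gsc = 0) = (tli t (list_encode ys) = 0)"
        using len unfolding gsc by (simp add: tli_zero)
      have A: "\<forall>t < ?gsc. tli t ?gsc \<noteq> 0 \<longrightarrow> E1L es (jd md (nth' t ?gsc) (list_encode xs) (nth' t (list_encode ys)))"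
      proof (intro allI impI)
        fix t assume t: "t < ?gsc" "tli t ?gsc \<noteq> 0"
        then have "t < length gs" using tli_nz[of t "map code gs"] unfolding gsc by simp
        then show "E1L es (jd md (nth' t ?gsc) (list_encode xs) (nth' t (list_encode ys)))"
          using es1(2) len unfolding gsc by (auto simp: nth'_le es_def intro: E1L_mono)
      qed
      have F: "E1L es (jd md (pfst (psnd (code (Comp f gs)))) (list_encode ys) z)"
        using es2(2) by (auto simp: es_def intro: E1L_mono)
      have "okd (E1L es) (E2L es) md (code (Comp f gs)) (list_encode xs) z (list_encode ys)"
        unfolding okd_def using T L A F by blast
      then show ?case using add_entry_ex[OF v] by blast
    next
      case (ev_pr0 f xs y g)
      obtain es where es: "valid es" "E1L es (jd md (code f) (list_encode xs) y)" using ev_pr0.IH by blast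
      have "okd (E1L es) (E2L es) md (code (PrimRec f g)) (list_encode (0 # xs)) y 0"
        using es(2) by (simp add: okd_def le_Cons)
      then show ?case using add_entry_ex[OF es(1)] by blast
    next
      case (ev_prS f g n xs r y)
      obtain es1 where es1: "valid es1" "E1L es1 (jd md (code (PrimRec f g)) (list_encode (n # xs)) r)" using ev_prS.IH(1) by blast
      obtain es2 where es2: "valid es2" "E1L es2 (jd md (code g) (list_encode (n # r # xs)) y)" using ev_prS.IH(2) by blast
      define es where "es = es1 @ es2"
      have v: "valid es" unfolding es_def by (rule valid_append[OF es1(1) es2(1)])
      have a: "E1L es (jd md (code (PrimRec f g)) (list_encode (n # xs)) r)" "E1L es (jd md (code g) (list_encode (n # r # xs)) y)"
        using es1(2) es2(2) by (auto simp: es_def intro: E1L_mono)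
      have "okd (E1L es) (E2L es) md (code (PrimRec f g)) (list_encode (Suc n # xs)) y r"
        using a by (simp add: okd_def cons_def)
      then show ?case using add_entry_ex[OF v] by blast
    next
      case (ev_mu f y xs)
      have "\<forall>z<y. \<exists>es. valid es \<and> (\<exists>v. v \<noteq> 0 \<and> E1L es (jd md (code f) (list_encode (z # xs)) v))"
        using ev_mu.IH(2) by fast
      from family[OF this] obtain es1 where es1: "valid es1" "\<forall>z<y. \<exists>v. v \<noteq> 0 \<and> E1L es1 (jd md (code f) (list_encode (z # xs)) v)"
        using E1L_mono by blast
      obtain es2 where es2: "valid es2" "E1L es2 (jd md (code f) (list_encode (y # xs)) 0)" using ev_mu.IH(1) by blast
      define es where "es = es1 @ es2"
      have v: "valid es" unfolding es_def by (rule valid_append[OF es1(1) es2(1)])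
      have b: "\<forall>z<y. E2L es (key md (code f) (cons z (list_encode xs)))"
      proof (intro allI impI)
        fix z assume "z < y"
        then obtain v where v: "v \<noteq> 0" "E1L es1 (jd md (code f) (list_encode (z # xs)) v)" using es1(2) by blast
        then obtain x where x: "x \<in> set es1" "pfst x = jd md (code f) (list_encode (z # xs)) v" by (auto simp: E1L_def)
        show "E2L es (key md (code f) (cons z (list_encode xs)))"
          unfolding E2L_def es_def using x v by (intro bexI[of _ x]) (auto simp: jd_def cons_def)
      qed
      have a: "E1L es (jd md (code f) (cons y (list_encode xs)) 0)"
        using es2(2) by (auto simp: es_def cons_def intro: E1L_mono)
      have "okd (E1L es) (E2L es) md (code (Mu f)) (list_encode xs) y 0"
        using a b by (simp add: okd_def)
      then show ?case using add_entry_ex[OF v] by blast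
    qed
  qed
qed

lemma complete: "eval (orc md) p xs y \<Longrightarrow> \<exists>es. valid es \<and> E1L es (jd md (code p) (list_encode xs) y)"
  using complete_aux by blast

end


lemma mu_halts:
  assumes "\<forall>e. eval \<alpha> p (map e [0..<2]) (G (e 0) (e 1))"
  shows "(\<exists>y. eval \<alpha> (Mu p) [x] y) \<longleftrightarrow> (\<exists>c. G c x = 0)"
proof -
  have ev: "eval \<alpha> p [c, x] (G c x)" for c
    using assms[rule_format, of "\<lambda>i. if i = 0 then c else x"] by (simp add: upt_rec)
  show ?thesis
  proof
    assume "\<exists>y. eval \<alpha> (Mu p) [x] y"
    then obtain y where "eval \<alpha> (Mu p) [x] y" by blast
    then have "eval \<alpha> p [y, x] 0" by (cases rule: eval.cases) auto
    then show "\<exists>c. G c x = 0" using ev eval_det by blast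
  next
    assume "\<exists>c. G c x = 0"
    define c0 where "c0 = (LEAST c. G c x = 0)"
    have z: "G c0 x = 0" unfolding c0_def using \<open>\<exists>c. G c x = 0\<close> by (rule LeastI_ex)
    have nz: "\<forall>z<c0. G z x \<noteq> 0" unfolding c0_def using not_less_Least by blast
    have "eval \<alpha> (Mu p) [x] c0"
    proof (rule ev_mu)
      show "eval \<alpha> p [c0, x] 0" using ev[of c0] z by simp
      show "\<forall>z<c0. \<exists>v. v \<noteq> 0 \<and> eval \<alpha> p [z, x] v" using ev nz by blast
    qed
    then show "\<exists>y. eval \<alpha> (Mu p) [x] y" by blast
  qed
qed

lemma ce_rc:
  assumes "rcomp 2 (\<lambda>e. of_bool (Q (e 0) (e 1)))"
  shows "{x. \<exists>c. Q c x} \<in> ce_sets"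
proof -
  have "rcomp 2 (\<lambda>e. if Q (e 0) (e 1) then 0 else 1)"
    by (intro rc_if assms rc_const)
  then obtain p where p: "\<forall>e. eval (\<lambda>_. 0) p (map e [0..<2]) (if Q (e 0) (e 1) then 0 else 1)"
    unfolding rcomp_def by blast
  have "{x. \<exists>c. Q c x} = {n. \<exists>y. eval (\<lambda>_. 0) (Mu p) [n] y}"
    using mu_halts[OF p] by auto
  then show ?thesis unfolding ce_sets_def by blast
qed

lemma Dcan_pow2[simp]: "Dcan (2 ^ e) = {e}"
  by (auto simp: Dcan_def bit_exp_iff)

lemma ce_single: "{a} \<in> ce_sets"
proof -
  have "{x. \<exists>c::nat. x = a} \<in> ce_sets" by (rule ce_rc) (intro rc_basic; simp)
  then show ?thesis by simp
qed

lemma ce_empty: "{} \<in> ce_sets"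
proof -
  have "{x. \<exists>c::nat. False} \<in> ce_sets" by (rule ce_rc) (intro rc_basic; simp)
  then show ?thesis by simp
qed


theorem corollary7p14:
  shows "\<not> (\<exists>f. embeds_E_K2eff f)"
proof
  assume "\<exists>f. embeds_E_K2eff f"
  then obtain f where inj: "inj_on f ce_sets" and img: "f ` ce_sets \<subseteq> K2eff"
    and app: "\<forall>A\<in>ce_sets. \<forall>B\<in>ce_sets. E_app A B \<in> ce_sets \<longrightarrow> K2app (f A) (f B) (f (E_app A B))"
    unfolding embeds_E_K2eff_def by blast
  have K2: "A \<in> ce_sets \<Longrightarrow> f A \<in> K2eff" for A using img by blast
  have appE: "eval (join (f A) (f B)) (from_nat (f A 0)) [n] (f (E_app A B) n)"
    if "A \<in> ce_sets" "B \<in> ce_sets" "E_app A B \<in> ce_sets" for A B n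
    using app that unfolding K2app_def Phi_def by blast

  interpret T: csem "\<lambda>_. 0" "\<lambda>_. 0" "\<lambda>_. 0" Zero "\<lambda>_ _. 0"
    by unfold_locales (auto intro: ev_zero)
  have T0: "T.orc 0 = (\<lambda>_. 0)" by (simp add: T.orc_def)
  have zr: "\<And>m A. rcomp m A \<Longrightarrow> rcomp m (\<lambda>e. (\<lambda>_::nat. 0::nat) (A e))" by (simp add: rc_const)

  define K where "K = {e. \<exists>c. T.valid_c c \<and> T.haskey_c c (key 0 e (cons e 0))}"
  have KT: "code p \<in> K \<longleftrightarrow> (\<exists>y. eval (\<lambda>_. 0) p [code p] y)" for p
  proof
    assume "code p \<in> K"
    then obtain c where c: "T.valid_c c" "T.haskey_c c (key 0 (code p) (cons (code p) 0))" by (auto simp: K_def)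
    define es where "es = list_decode c"
    have ce: "c = list_encode es" by (simp add: es_def)
    have v: "T.valid es" using c(1) T.valid_c_le ce by simp
    obtain x where x: "x \<in> set es" "pfst (pfst x) = key 0 (code p) (cons (code p) 0)"
      using c(2) T.haskey_c_le ce by auto
    obtain i where i: "i < length es" "es ! i = x" using x(1) by (auto simp: in_set_conv_nth)
    have "pfst (es ! i) = jd 0 (code p) (cons (code p) 0) (psnd (pfst x))"
      using x(2) i(2) unfolding jd_def by (metis pe_eq_iff)
    from T.sound[OF v i(1) this] show "\<exists>y. eval (\<lambda>_. 0) p [code p] y" by (auto simp: T0)
  next
    assume "\<exists>y. eval (\<lambda>_. 0) p [code p] y"
    then obtain y where "eval (T.orc 0) p [code p] y" by (auto simp: T0)
    from T.complete[OF this] obtain es where es: "T.valid es" "T.E1L es (jd 0 (code p) (list_encode [code p]) y)" by blast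
    obtain x where x: "x \<in> set es" "pfst x = jd 0 (code p) (cons (code p) 0) y"
      using es(2) by (auto simp: T.E1L_def cons_def)
    have "T.haskey_c (list_encode es) (key 0 (code p) (cons (code p) 0))"
      unfolding T.haskey_c_le using x by (intro bexI[of _ x]) (auto simp: jd_def)
    moreover have "T.valid_c (list_encode es)" using es(1) T.valid_c_le by simp
    ultimately show "code p \<in> K" by (auto simp: K_def)
  qed

  define Sset where "Sset = {x. \<exists>c. x = prod_encode (Suc c, 2 ^ c)}"
  define Pset where "Pset = {x. \<exists>e. x = prod_encode (0, 2 ^ e) \<and> e \<in> K}"
  have Sce: "Sset \<in> ce_sets" unfolding Sset_def
    by (rule ce_rc) (intro rc_basic rc_pe rc_pow2; simp)
  have Peq: "Pset = {x. \<exists>c. T.valid_c c \<and> (\<exists>e<Suc x. x = prod_encode (0, 2 ^ e) \<and> T.haskey_c c (key 0 e (cons e 0)))}"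
  proof -
    have b: "e < Suc (prod_encode (0, 2 ^ e))" for e
    proof -
      have "e < 2 ^ e" by (rule less_exp)
      also have "\<dots> \<le> prod_encode (0, 2 ^ e)" by (rule le_prod_encode_2)
      finally show ?thesis by simp
    qed
    show ?thesis unfolding Pset_def K_def using b by blast
  qed
  have Pce: "Pset \<in> ce_sets" unfolding Peq
    by (rule ce_rc) (unfold key_def, intro rc_basic rc_pe rc_pow2 rc_cons T.rc_valid[OF zr zr zr] T.rc_haskey; simp)
  have ES: "E_app Sset {l} = {Suc l}" for l
    unfolding E_app_def Sset_def by auto
  have EP: "E_app Pset {d} = (if d \<in> K then {0} else {})" for d
    unfolding E_app_def Pset_def by auto
  have EPce: "E_app Pset {d} \<in> ce_sets" for d
    unfolding EP using ce_single ce_empty by simp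

  have HSf: "eval (join (f Sset) (f {l})) (from_nat (f Sset 0)) [n] (f {Suc l} n)" for l n
    using appE[OF Sce ce_single, of l n] ES ce_single by simp
  interpret R: csem "f Sset" "f Pset" "f {0}" "from_nat (f Sset 0)" "\<lambda>l. f {l}"
    by unfold_locales (simp_all add: HSf)

  have "f {0} \<noteq> f {}" using inj ce_single ce_empty unfolding inj_on_def by blast
  then obtain k where k: "f {0} k \<noteq> f {} k" by (auto simp: fun_eq_iff)
  define qP where "qP = (from_nat (f Pset 0) :: prog)"
  define v0 where "v0 = f {} k"
  have fSr: "\<And>m A. rcomp m A \<Longrightarrow> rcomp m (\<lambda>e. f Sset (A e))" by (rule rc_K2eff[OF K2[OF Sce]])
  have fPr: "\<And>m A. rcomp m A \<Longrightarrow> rcomp m (\<lambda>e. f Pset (A e))" by (rule rc_K2eff[OF K2[OF Pce]])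
  have h0r: "\<And>m A. rcomp m A \<Longrightarrow> rcomp m (\<lambda>e. f {0} (A e))" by (rule rc_K2eff[OF K2[OF ce_single]])
  define G where "G = (\<lambda>c x. if R.valid_c c \<and> R.has_c c (jd (2 * x + 2) (code qP) (cons k 0) v0) then 0 else (1::nat))"
  have "rcomp 2 (\<lambda>e. G (e 0) (e 1))"
    unfolding G_def jd_def key_def
    by (intro rc_if rc_basic rc_pe rc_cons R.rc_valid[OF fSr fPr h0r] R.rc_has; simp)
  then obtain pD where pD: "\<forall>e. eval (\<lambda>_. 0) pD (map e [0..<2]) (G (e 0) (e 1))"
    unfolding rcomp_def by blast
  define D where "D = Mu pD"
  define d where "d = code D"
  have H1: "d \<in> K \<longleftrightarrow> (\<exists>y. eval (\<lambda>_. 0) D [d] y)" unfolding d_def by (rule KT)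
  have H2: "(\<exists>y. eval (\<lambda>_. 0) D [d] y) \<longleftrightarrow> (\<exists>c. R.valid_c c \<and> R.has_c c (jd (2 * d + 2) (code qP) (cons k 0) v0))"
    unfolding D_def using mu_halts[OF pD, of d] by (simp add: G_def)
  have H3: "(\<exists>c. R.valid_c c \<and> R.has_c c (jd (2 * d + 2) (code qP) (cons k 0) v0)) \<longleftrightarrow> eval (R.orc (2 * d + 2)) qP [k] v0"
  proof
    assume "\<exists>c. R.valid_c c \<and> R.has_c c (jd (2 * d + 2) (code qP) (cons k 0) v0)"
    then obtain c where c: "R.valid_c c" "R.has_c c (jd (2 * d + 2) (code qP) (cons k 0) v0)" by blast
    define es where "es = list_decode c"
    have ce: "c = list_encode es" by (simp add: es_def)
    have v: "R.valid es" using c(1) R.valid_c_le ce by simp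
    have "R.E1L es (jd (2 * d + 2) (code qP) (cons k 0) v0)" using c(2) R.has_c_le ce by simp
    then obtain x where x: "x \<in> set es" "pfst x = jd (2 * d + 2) (code qP) (cons k 0) v0" by (auto simp: R.E1L_def)
    obtain i where i: "i < length es" "es ! i = x" using x(1) by (auto simp: in_set_conv_nth)
    have "pfst (es ! i) = jd (2 * d + 2) (code qP) (cons k 0) v0" using x(2) i(2) by simp
    from R.sound[OF v i(1) this] show "eval (R.orc (2 * d + 2)) qP [k] v0" by simp
  next
    assume "eval (R.orc (2 * d + 2)) qP [k] v0"
    from R.complete[OF this] obtain es where es: "R.valid es" "R.E1L es (jd (2 * d + 2) (code qP) (list_encode [k]) v0)" by blast
    have "R.has_c (list_encode es) (jd (2 * d + 2) (code qP) (cons k 0) v0)"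
      using es(2) R.has_c_le by (simp add: cons_def)
    moreover have "R.valid_c (list_encode es)" using es(1) R.valid_c_le by simp
    ultimately show "\<exists>c. R.valid_c c \<and> R.has_c c (jd (2 * d + 2) (code qP) (cons k 0) v0)" by blast
  qed
  have H4: "eval (R.orc (2 * d + 2)) qP [k] v0 \<longleftrightarrow> f (E_app Pset {d}) k = v0"
  proof -
    have "eval (join (f Pset) (f {d})) qP [k] (f (E_app Pset {d}) k)"
      unfolding qP_def by (rule appE[OF Pce ce_single EPce])
    moreover have "R.orc (2 * d + 2) = join (f Pset) (f {d})" by (rule R.orc_P)
    ultimately show ?thesis using eval_det by metis
  qed
  have "d \<in> K \<longleftrightarrow> f (E_app Pset {d}) k = f {} k" using H1 H2 H3 H4 by (simp add: v0_def)
  also have "\<dots> \<longleftrightarrow> d \<notin> K" using k by (simp add: EP)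
  finally show False by blast
qed


end
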